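(* Let $n\ge1$, let $q$ be an integer with $0<q\le n$, and let $f\colon\mathbb Z_2^n\to\mathbb Z_2^n$ be a map such that every $\vec y\in\mathbb Z_2^n$ has at most $2^q$ preimages under $f$. Then there is an even permutation $h$ of $\mathbb Z_2^{n+q}$ with at most $2^{n+1}$ non-fixed points such that $\psi_{n+q,n}(h(\phi_{n,n+q}(\vec x)))=f(\vec x)$ for all $\vec x\in\mathbb Z_2^n$; consequently $f$ can be implemented by a reversible circuit of NOT, CNOT and 2-CNOT gates on $n+q$ lines with $q$ additional inputs, i.e. $f\in F(n,q)$.
   Context: For $m\ge1$, a $k$-CNOT gate on $m$ lines with control lines $i_1,\dots,i_k$ and target line $j\notin\{i_1,\dots,i_k\}$ is the map $\mathbb Z_2^m\to\mathbb Z_2^m$ replacing $x_j$ by $x_j\oplus(x_{i_1}\wedge\dots\wedge x_{i_k})$ and leaving other coordinates unchanged; NOT, CNOT, 2-CNOT are the cases $k=0,1,2$. A reversible circuit on $m$ lines is a finite sequence of such gates and computes their composition $g$. With $\phi_{n,n+q}(\langle x_1,\dots,x_n\rangle)=\langle x_1,\dots,x_n,0,\dots,0\rangle$ and $\psi_{n+q,n}(\langle x_1,\dots,x_{n+q}\rangle)=\langle x_1,\dots,x_n\rangle$, such a circuit on $n+q$ lines implements $f\colon\mathbb Z_2^n\to\mathbb Z_2^n$ with $q$ additional inputs if $\psi_{n+q,n}(g(\phi_{n,n+q}(\vec x)))=f(\vec x)$ for all $\vec x$. $F(n,q)$ denotes the set of all maps $\mathbb Z_2^n\to\mathbb Z_2^n$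 implementable in this way. A non-fixed point of a permutation $h$ is a point $\vec x$ with $h(\vec x)\ne\vec x$. *)

theory Defs
  imports "HOL-Combinatorics.Permutations"
begin

text \<open>Vectors of Z_2^m are boolean lists of length m (True = 1); lines are indexed 0..m-1.\<close>

definition Zvec :: "nat \<Rightarrow> bool list set" where
  "Zvec m = {xs. length xs = m}"

definition phi :: "nat \<Rightarrow> nat \<Rightarrow> bool list \<Rightarrow> bool list" where
  "phi n m xs = xs @ replicate (m - n) False"

definition psi :: "nat \<Rightarrow> nat \<Rightarrow> bool list \<Rightarrow> bool list" where
  "psi m n xs = take n xs"

text \<open>A gate is a pair (controls, target).\<close>
type_synonym gate = "nat set \<times> nat"

definition gate_ok :: "nat \<Rightarrow> gate \<Rightarrow> bool" where
  "gate_ok m g = (finite (fst g) \<and> fst g \<subseteq> {..<m} \<and> snd g < m \<and> snd g \<notin> fst g)"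

text \<open>NOT, CNOT and 2-CNOT gates: at most 2 control lines.\<close>
definition gate_ok_012 :: "nat \<Rightarrow> gate \<Rightarrow> bool" where
  "gate_ok_012 m g = (gate_ok m g \<and> card (fst g) \<le> 2)"

definition apply_gate :: "gate \<Rightarrow> bool list \<Rightarrow> bool list" where
  "apply_gate g xs = xs[snd g := (xs ! snd g \<noteq> (\<forall>i\<in>fst g. xs ! i))]"

definition run_circuit :: "gate list \<Rightarrow> bool list \<Rightarrow> bool list" where
  "run_circuit c xs = fold apply_gate c xs"

definition Fset :: "nat \<Rightarrow> nat \<Rightarrow> (bool list \<Rightarrow> bool list) set" where
  "Fset n q = {f. \<exists>c. (\<forall>g\<in>set c. gate_ok_012 (n + q) g) \<and>
      (\<forall>x\<in>Zvec n. psi (n + q) n (run_circuit c (phi n (n + q) x)) = f x)}"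

end

theory Submission
  imports Defs
begin

definition realz :: "nat \<Rightarrow> (bool list \<Rightarrow> bool list) \<Rightarrow> bool" where
  "realz m g = (\<exists>c. (\<forall>x\<in>set c. gate_ok_012 m x) \<and> (\<forall>x\<in>Zvec m. run_circuit c x = g x))"

definition flip :: "nat \<Rightarrow> bool list \<Rightarrow> bool list" where
  "flip k a = a[k := (\<not> a ! k)]"

lemma length_apply_gate[simp]: "length (apply_gate g xs) = length xs"
  by (simp add: apply_gate_def)

lemma length_run[simp]: "length (run_circuit c xs) = length xs"
  unfolding run_circuit_def by (induction c arbitrary: xs) auto

lemma run_Zvec: "x \<in> Zvec m \<Longrightarrow> run_circuit c x \<in> Zvec m"
  by (simp add: Zvec_def)

lemma nth_apply_gate:
  "t < length xs \<Longrightarrow> apply_gate (S,t) xs ! k = (if k = t then (xs ! t \<noteq> (\<forall>i\<in>S. xs ! i)) else xs ! k)"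
  by (simp add: apply_gate_def nth_list_update)

lemma apply_gate_invol: "snd g \<notin> fst g \<Longrightarrow> apply_gate g (apply_gate g xs) = xs"
proof -
  assume a: "snd g \<notin> fst g"
  obtain S t where g: "g = (S,t)" by (cases g)
  show ?thesis
  proof (cases "t < length xs")
    case True
    have "\<forall>i\<in>S. xs[t := v] ! i = xs ! i" for v using a g by (metis nth_list_update_neq prod.sel(1) prod.sel(2))
    moreover have "\<And>P. ((xs ! t = P) = P) = xs ! t" by blast
    ultimately show ?thesis using True g by (simp add: apply_gate_def)
  next
    case False
    then show ?thesis using g by (simp add: apply_gate_def list_update_beyond)
  qed
qed

lemma run_append: "run_circuit (c1 @ c2) x = run_circuit c2 (run_circuit c1 x)"
  by (simp add: run_circuit_def)

lemma run_rev: "\<forall>g\<in>set c. snd g \<notin> fst g \<Longrightarrow> run_circuit (rev c) (run_circuit c x) = x"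
  unfolding run_circuit_def
  by (induction c arbitrary: x) (auto simp: apply_gate_invol)

lemma realz_id: "realz m (\<lambda>x. x)"
  unfolding realz_def by (rule exI[of _ "[]"]) (simp add: run_circuit_def)

lemma realz_comp: "realz m g1 \<Longrightarrow> realz m g2 \<Longrightarrow> realz m (g2 \<circ> g1)"
  unfolding realz_def
proof (elim exE conjE)
  fix c1 c2 assume a: "\<forall>x\<in>set c1. gate_ok_012 m x" "\<forall>x\<in>Zvec m. run_circuit c1 x = g1 x"
    "\<forall>x\<in>set c2. gate_ok_012 m x" "\<forall>x\<in>Zvec m. run_circuit c2 x = g2 x"
  show "\<exists>c. (\<forall>x\<in>set c. gate_ok_012 m x) \<and> (\<forall>x\<in>Zvec m. run_circuit c x = (g2 \<circ> g1) x)"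
  proof (rule exI[of _ "c1 @ c2"], intro conjI ballI)
    fix x assume x: "x \<in> Zvec m"
    have "g1 x \<in> Zvec m" using a(2) x run_Zvec by metis
    then show "run_circuit (c1 @ c2) x = (g2 \<circ> g1) x" using a x by (simp add: run_append)
  qed (use a in auto)
qed

lemma realz_cong: "realz m g \<Longrightarrow> (\<And>x. x \<in> Zvec m \<Longrightarrow> g x = g' x) \<Longrightarrow> realz m g'"
  unfolding realz_def by auto

lemma realz_gate: "gate_ok_012 m g \<Longrightarrow> realz m (apply_gate g)"
  unfolding realz_def by (rule exI[of _ "[g]"]) (simp add: run_circuit_def)

lemma realz_inv: "realz m g \<Longrightarrow> (\<And>x. x \<in> Zvec m \<Longrightarrow> h x \<in> Zvec m \<and> g (h x) = x) \<Longrightarrow> realz m h"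
  unfolding realz_def
proof (elim exE conjE)
  fix c assume a: "\<forall>x\<in>set c. gate_ok_012 m x" "\<forall>x\<in>Zvec m. run_circuit c x = g x"
    and h: "\<And>x. x \<in> Zvec m \<Longrightarrow> h x \<in> Zvec m \<and> g (h x) = x"
  have ok: "\<forall>g\<in>set c. snd g \<notin> fst g" using a(1) by (auto simp: gate_ok_012_def gate_ok_def)
  show "\<exists>c. (\<forall>x\<in>set c. gate_ok_012 m x) \<and> (\<forall>x\<in>Zvec m. run_circuit c x = h x)"
  proof (rule exI[of _ "rev c"], intro conjI ballI)
    fix x assume x: "x \<in> Zvec m"
    have "run_circuit (rev c) x = run_circuit (rev c) (run_circuit c (h x))"
      using h[OF x] a(2) by auto
    also have "\<dots> = h x" by (rule run_rev[OF ok])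
    finally show "run_circuit (rev c) x = h x" .
  qed (use a in auto)
qed

lemma split_identity:
  assumes "S1 \<inter> S2 = {}" "b \<notin> S1" "b \<notin> S2" "t \<notin> S1" "t \<notin> S2" "b \<noteq> t"
    "t < length x" "b < length x"
  shows "apply_gate (S1 \<union> S2, t) x =
    apply_gate (S1, b) (apply_gate (insert b S2, t) (apply_gate (S1, b) (apply_gate (insert b S2, t) x)))"
    (is "?L = ?R")
proof -
  define x1 where "x1 = apply_gate (insert b S2, t) x"
  define x2 where "x2 = apply_gate (S1, b) x1"
  define x3 where "x3 = apply_gate (insert b S2, t) x2"
  have l: "length x1 = length x" "length x2 = length x" "length x3 = length x"
    by (simp_all add: x1_def x2_def x3_def)
  have n1: "x1 ! k = (if k = t then (x ! t \<noteq> (\<forall>i\<in>insert b S2. x ! i)) else x ! k)" for k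
    unfolding x1_def using assms by (simp add: nth_apply_gate)
  have n2: "x2 ! k = (if k = b then (x1 ! b \<noteq> (\<forall>i\<in>S1. x1 ! i)) else x1 ! k)" for k
    unfolding x2_def using assms l by (simp add: nth_apply_gate)
  have n3: "x3 ! k = (if k = t then (x2 ! t \<noteq> (\<forall>i\<in>insert b S2. x2 ! i)) else x2 ! k)" for k
    unfolding x3_def using assms l by (simp add: nth_apply_gate)
  have n4: "?R ! k = (if k = b then (x3 ! b \<noteq> (\<forall>i\<in>S1. x3 ! i)) else x3 ! k)" for k
    unfolding x3_def[symmetric] x2_def[symmetric] x1_def[symmetric] using assms l by (simp add: nth_apply_gate)
  have s1: "(\<forall>i\<in>S1. x1 ! i) = (\<forall>i\<in>S1. x ! i)" "(\<forall>i\<in>S1. x3 ! i) = (\<forall>i\<in>S1. x ! i)"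
    using assms by (auto simp: n1 n2 n3)
  have s2: "(\<forall>i\<in>S2. x2 ! i) = (\<forall>i\<in>S2. x ! i)"
    using assms by (auto simp: n1 n2)
  show ?thesis
  proof (rule nth_equalityI)
    show "length ?L = length ?R" by (simp add: l[unfolded x3_def x2_def x1_def])
  next
    fix k assume "k < length ?L"
    show "?L ! k = ?R ! k"
      using assms s1 s2 unfolding n4 n3 n2 n1 nth_apply_gate[OF assms(7)]
      by auto
  qed
qed


lemma realz_split:
  assumes "S1 \<inter> S2 = {}" "b \<notin> S1" "b \<notin> S2" "t \<notin> S1" "t \<notin> S2" "b \<noteq> t" "t < m" "b < m"
    and A: "realz m (apply_gate (S1, b))" and B: "realz m (apply_gate (insert b S2, t))"
  shows "realz m (apply_gate (S1 \<union> S2, t))"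
proof -
  let ?A = "apply_gate (S1, b)" and ?B = "apply_gate (insert b S2, t)"
  have "realz m (?A \<circ> ?B \<circ> ?A \<circ> ?B)"
    using A B by (intro realz_comp) auto
  then show ?thesis
    by (rule realz_cong) (use assms in \<open>auto simp: Zvec_def intro!: split_identity[symmetric]\<close>)
qed

lemma mcnot_free:
  "card S = k \<Longrightarrow> finite S \<Longrightarrow> S \<subseteq> {..<m} \<Longrightarrow> t < m \<Longrightarrow> t \<notin> S \<Longrightarrow> finite F \<Longrightarrow> F \<subseteq> {..<m}
   \<Longrightarrow> F \<inter> S = {} \<Longrightarrow> t \<notin> F \<Longrightarrow> card S \<le> card F + 2 \<Longrightarrow> realz m (apply_gate (S,t))"
proof (induction k arbitrary: S t F rule: less_induct)
  case (less k)
  show ?case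
  proof (cases "card S \<le> 2")
    case True
    then show ?thesis using less.prems
      by (intro realz_gate) (auto simp: gate_ok_012_def gate_ok_def)
  next
    case False
    then obtain s where s: "s \<in> S" by fastforce
    from False less.prems have "card F \<ge> 1" by linarith
    then obtain f where f: "f \<in> F" using less.prems(6) by fastforce
    define S1 where "S1 = S - {s}"
    have S: "S = S1 \<union> {s}" using s S1_def by auto
    have c1: "card S1 < k" using less.prems s S1_def False by (simp add: card_Diff_singleton)
    have fm: "f < m" using f less.prems by auto
    have A: "realz m (apply_gate (S1, f))"
    proof (rule less.IH[OF c1 refl, where F = "insert t (F - {f})"])
      show "card S1 \<le> card (insert t (F - {f})) + 2"
        using less.prems f s S1_def by (simp add: card_Diff_singleton)
    qed (use less.prems f s S1_def fm in auto)
    have B: "realz m (apply_gate (insert f {s}, t))"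
      using less.prems f s fm
      by (intro realz_gate) (auto simp: gate_ok_012_def gate_ok_def card_insert_if)
    show ?thesis
      unfolding S
      by (rule realz_split[OF _ _ _ _ _ _ _ fm A B]) (use less.prems f s S1_def in auto)
  qed
qed

lemma mcnot:
  assumes "S \<subseteq> {..<m}" "t < m" "t \<notin> S" "b < m" "b \<notin> S" "b \<noteq> t"
  shows "realz m (apply_gate (S,t))"
proof -
  have fin: "finite S" using assms(1) finite_subset by blast
  obtain S1 where S1: "S1 \<subseteq> S" "card S1 = card S div 2"
    using obtain_subset_with_card_n[of "card S div 2" S] by auto
  define S2 where "S2 = S - S1"
  have fin1: "finite S1" "finite S2" using fin S1 S2_def finite_subset by auto
  have c2: "card S2 = card S - card S div 2" using S1 fin S2_def by (simp add: card_Diff_subset fin1)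
  have A: "realz m (apply_gate (S1, b))"
    by (rule mcnot_free[OF refl fin1(1), where F = "insert t S2"])
       (use assms S1 S2_def fin1 c2 in \<open>auto simp: card_insert_if\<close>)
  have B: "realz m (apply_gate (insert b S2, t))"
    by (rule mcnot_free[OF refl _, where F = "S1"])
       (use assms S1 S2_def fin1 c2 in \<open>auto simp: card_insert_if\<close>)
  have "S = S1 \<union> S2" using S1 S2_def by auto
  then show ?thesis
    using realz_split[OF _ _ _ _ _ _ _ _ A B] assms S1 S2_def by auto
qed

lemma flip_Zvec[simp]: "flip k a \<in> Zvec m \<longleftrightarrow> a \<in> Zvec m"
  by (simp add: flip_def Zvec_def)

lemma length_flip[simp]: "length (flip k a) = length a"
  by (simp add: flip_def)

lemma nth_flip: "k < length a \<Longrightarrow> flip k a ! i = (if i = k then \<not> a ! k else a ! i)"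
  by (simp add: flip_def nth_list_update)

lemma flip_flip[simp]: "flip k (flip k a) = a"
  by (cases "k < length a") (simp_all add: flip_def list_update_beyond)

lemma flip_comm: "flip i (flip j a) = flip j (flip i a)"
  by (cases "i = j") (auto simp: flip_def list_update_swap nth_list_update)

lemma flip_neq: "k < length a \<Longrightarrow> flip k a \<noteq> a"
  by (metis flip_def nth_list_update_eq)

lemma flip_gate: "apply_gate ({}, k) x = flip k x"
  by (simp add: apply_gate_def flip_def)

lemma realz_flip: "k < m \<Longrightarrow> realz m (flip k)"
proof -
  assume "k < m"
  then have "realz m (apply_gate ({}, k))"
    by (intro realz_gate) (auto simp: gate_ok_012_def gate_ok_def)
  then show ?thesis by (simp add: flip_gate[abs_def])
qed

lemma reach:
  assumes "Q b" "\<And>a k. a \<in> Zvec m \<Longrightarrow> k < m \<Longrightarrow> Q a \<Longrightarrow> Q (flip k a)" "a \<in> Zvec m" "b \<in> Zvec m"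
  shows "Q a"
proof -
  have "\<And>a. card {k. k < m \<and> a ! k \<noteq> b ! k} = d \<Longrightarrow> a \<in> Zvec m \<Longrightarrow> Q a" for d
  proof (induction d)
    case 0
    then have "a = b" using assms(4)
      by (intro nth_equalityI) (auto simp: Zvec_def)
    then show ?case using assms(1) by simp
  next
    case (Suc d)
    then obtain k where k: "k < m" "a ! k \<noteq> b ! k"
      by (metis (mono_tags, lifting) card.empty empty_Collect_eq nat.simps(3))
    have la: "length a = m" using Suc.prems by (simp add: Zvec_def)
    have "{i. i < m \<and> flip k a ! i \<noteq> b ! i} = {i. i < m \<and> a ! i \<noteq> b ! i} - {k}"
      using k la by (auto simp: nth_flip)
    then have "card {i. i < m \<and> flip k a ! i \<noteq> b ! i} = d"
      using Suc.prems k by (simp add: card_Diff_singleton)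
    then have "Q (flip k a)" using Suc.IH Suc.prems by simp
    then have "Q (flip k (flip k a))" using assms(2)[of "flip k a" k] Suc.prems k by simp
    then show ?case by simp
  qed
  then show ?thesis using assms(3) by blast
qed

definition edge :: "bool list \<Rightarrow> nat \<Rightarrow> bool list \<Rightarrow> bool list" where
  "edge a j = transpose a (flip j a)"

lemma edge_Zvec: "a \<in> Zvec m \<Longrightarrow> x \<in> Zvec m \<Longrightarrow> edge a j x \<in> Zvec m"
  by (auto simp: edge_def transpose_def)

lemma edge_invol[simp]: "edge a j (edge a j x) = x"
  by (simp add: edge_def)

lemma edge_flip_same: "edge (flip j a) j = edge a j"
  by (simp add: edge_def transpose_commute)

lemma conj_transpose:
  assumes "\<And>x. x \<in> Zvec m \<Longrightarrow> g x \<in> Zvec m \<and> g (g x) = x" "a \<in> Zvec m" "b \<in> Zvec m" "x \<in> Zvec m"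
  shows "g (transpose a b (g x)) = transpose (g a) (g b) x"
proof -
  have "g x = a \<longleftrightarrow> x = g a" "g x = b \<longleftrightarrow> x = g b" using assms by metis+
  then show ?thesis using assms by (auto simp: transpose_def)
qed

definition rel :: "nat \<Rightarrow> (bool list \<Rightarrow> bool list) \<Rightarrow> (bool list \<Rightarrow> bool list) \<Rightarrow> bool" where
  "rel m e1 e2 = realz m (e1 \<circ> e2)"

lemma rel_sym:
  assumes "rel m (edge a i) (edge b j)" "a \<in> Zvec m" "b \<in> Zvec m"
  shows "rel m (edge b j) (edge a i)"
  unfolding rel_def
  by (rule realz_inv[OF assms(1)[unfolded rel_def]]) (use assms in \<open>auto simp: edge_Zvec\<close>)

lemma rel_trans:
  assumes "rel m e1 (edge b j)" "rel m (edge b j) e3"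
  shows "rel m e1 e3"
proof -
  have "realz m ((e1 \<circ> edge b j) \<circ> (edge b j \<circ> e3))"
    using assms unfolding rel_def by (rule realz_comp[rotated])
  then show ?thesis unfolding rel_def by (rule realz_cong) simp
qed

lemma rel_refl: "rel m (edge a j) (edge a j)"
  unfolding rel_def by (rule realz_cong[OF realz_id]) simp

lemma rel_conj_flip:
  assumes "rel m (edge a i) (edge b j)" "a \<in> Zvec m" "b \<in> Zvec m" "k < m"
  shows "rel m (edge (flip k a) i) (edge (flip k b) j)"
proof -
  have "realz m (flip k \<circ> (edge a i \<circ> edge b j) \<circ> flip k)"
    using realz_comp[OF realz_flip[OF assms(4)] realz_comp[OF assms(1)[unfolded rel_def] realz_flip[OF assms(4)]]]
    by (simp add: comp_assoc)
  then show ?thesis unfolding rel_def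
  proof (rule realz_cong)
    fix x assume x: "x \<in> Zvec m"
    have inv: "\<And>x. x \<in> Zvec m \<Longrightarrow> flip k x \<in> Zvec m \<and> flip k (flip k x) = x" by simp
    have ce: "\<And>c l y. c \<in> Zvec m \<Longrightarrow> y \<in> Zvec m \<Longrightarrow> flip k (edge c l (flip k y)) = edge (flip k c) l y"
      unfolding edge_def using conj_transpose[OF inv] by (simp add: flip_comm)
    have yz: "flip k (edge b j (flip k x)) \<in> Zvec m" using x assms by (simp add: edge_Zvec)
    have "flip k (edge a i (edge b j (flip k x))) = flip k (edge a i (flip k (flip k (edge b j (flip k x)))))" by simp
    also have "\<dots> = edge (flip k a) i (flip k (edge b j (flip k x)))" using ce[OF assms(2) yz] .
    also have "\<dots> = edge (flip k a) i (edge (flip k b) j x)" using ce[OF assms(3) x] by simp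
    finally show "(flip k \<circ> (edge a i \<circ> edge b j) \<circ> flip k) x = (edge (flip k a) i \<circ> edge (flip k b) j) x"
      by simp
  qed
qed

lemma pair_ones:
  assumes ij: "i \<noteq> j" "i < m" "j < m" and x: "x \<in> Zvec m"
  shows "edge (replicate m True) j (edge (flip i (replicate m True)) j x)
        = apply_gate ({..<m} - {i,j}, j) x"
proof -
  define oo where "oo = replicate m True"
  define W where "W p q = oo[i := p, j := q]" for p q
  have lW: "length (W p q) = m" for p q by (simp add: W_def oo_def)
  have nW: "W p q ! k = (if k = j then q else if k = i then p else k < m)" if "k < m" for p q k
    using ij that by (simp add: W_def oo_def nth_list_update)
  have Winj: "W p q = W p' q' \<longleftrightarrow> p = p' \<and> q = q'" for p q p' q'
  proof
    assume h: "W p q = W p' q'"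
    have "W p q ! i = W p' q' ! i" "W p q ! j = W p' q' ! j" using h by simp_all
    then show "p = p' \<and> q = q'" using ij nW by simp
  qed simp
  have fi: "flip i (W p q) = W (\<not> p) q" for p q
    using ij by (intro nth_equalityI) (auto simp: lW nW nth_flip)
  have fj: "flip j (W p q) = W p (\<not> q)" for p q
    using ij by (intro nth_equalityI) (auto simp: lW nW nth_flip)
  have oo: "oo = W True True"
    using ij by (intro nth_equalityI) (auto simp: lW nW oo_def)
  have lx: "length x = m" using x by (simp add: Zvec_def)
  show ?thesis
  proof (cases "\<forall>k\<in>{..<m} - {i,j}. x ! k")
    case True
    define p q where "p = x ! i" and "q = x ! j"
    have xW: "x = W p q"
      using True ij lx unfolding p_def q_def by (intro nth_equalityI) (auto simp: lW nW)
    have g: "apply_gate ({..<m} - {i,j}, j) x = W p (\<not> q)"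
      using True ij lx unfolding p_def q_def by (intro nth_equalityI) (auto simp: lW nW nth_apply_gate)
    show ?thesis
      unfolding g unfolding oo_def[symmetric] edge_def oo fi fj xW
      by (cases p; cases q; simp add: Winj transpose_def)
  next
    case False
    have g: "apply_gate ({..<m} - {i,j}, j) x = x"
      using False ij lx by (intro nth_equalityI) (auto simp: nth_apply_gate)
    have nx: "x \<noteq> W p q" for p q using False nW ij by auto
    show ?thesis
      unfolding g oo_def[symmetric] edge_def oo fi fj
      using nx by (simp add: transpose_def)
  qed
qed

lemma edge_ones:
  assumes ij: "j < m" and x: "x \<in> Zvec m"
  shows "edge (replicate m True) j x = apply_gate ({..<m} - {j}, j) x"
proof -
  define oo where "oo = replicate m True"
  define W where "W q = oo[j := q]" for q
  have lW: "length (W q) = m" for q by (simp add: W_def oo_def)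
  have nW: "W q ! k = (if k = j then q else k < m)" if "k < m" for q k
    using ij that by (simp add: W_def oo_def nth_list_update)
  have Winj: "W q = W q' \<longleftrightarrow> q = q'" for q q'
  proof
    assume h: "W q = W q'"
    have "W q ! j = W q' ! j" using h by simp_all
    then show "q = q'" using ij nW by simp
  qed simp
  have fj: "flip j (W q) = W (\<not> q)" for q
    using ij by (intro nth_equalityI) (auto simp: lW nW nth_flip)
  have oo: "oo = W True"
    using ij by (intro nth_equalityI) (auto simp: lW nW oo_def)
  have lx: "length x = m" using x by (simp add: Zvec_def)
  show ?thesis
  proof (cases "\<forall>k\<in>{..<m} - {j}. x ! k")
    case True
    define q where "q = x ! j"
    have xW: "x = W q"
      using True ij lx unfolding q_def by (intro nth_equalityI) (auto simp: lW nW)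
    have g: "apply_gate ({..<m} - {j}, j) x = W (\<not> q)"
      using True ij lx unfolding q_def by (intro nth_equalityI) (auto simp: lW nW nth_apply_gate)
    show ?thesis
      unfolding g unfolding oo_def[symmetric] edge_def oo fj xW
      by (cases q; simp add: Winj transpose_def)
  next
    case False
    have g: "apply_gate ({..<m} - {j}, j) x = x"
      using False ij lx by (intro nth_equalityI) (auto simp: nth_apply_gate)
    have nx: "x \<noteq> W q" for q using False nW ij by auto
    show ?thesis
      unfolding g oo_def[symmetric] edge_def oo fj
      using nx by (simp add: transpose_def)
  qed
qed

definition fred :: "nat \<Rightarrow> nat \<Rightarrow> nat \<Rightarrow> bool list \<Rightarrow> bool list" where
  "fred c i j x = (if x ! c then x[i := x ! j, j := x ! i] else x)"

lemma fred_circ: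
  assumes "c \<noteq> i" "c \<noteq> j" "i \<noteq> j" "c < m" "i < m" "j < m" "x \<in> Zvec m"
  shows "run_circuit [({j}, i), ({c,i}, j), ({j}, i)] x = fred c i j x"
proof -
  have l: "length x = m" using assms by (simp add: Zvec_def)
  show ?thesis
    unfolding run_circuit_def fred_def
    using assms l
    by (intro nth_equalityI) (auto simp: nth_apply_gate nth_list_update)
qed

lemma realz_fred:
  assumes "c \<noteq> i" "c \<noteq> j" "i \<noteq> j" "c < m" "i < m" "j < m"
  shows "realz m (fred c i j)"
  unfolding realz_def
  by (rule exI[of _ "[({j}, i), ({c,i}, j), ({j}, i)]"])
     (use assms fred_circ in \<open>auto simp: gate_ok_012_def gate_ok_def\<close>)

lemma fred_Zvec: "x \<in> Zvec m \<Longrightarrow> fred c i j x \<in> Zvec m"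
  by (simp add: fred_def Zvec_def)

lemma fred_invol:
  assumes "c \<noteq> i" "c \<noteq> j" "i \<noteq> j" "c < m" "i < m" "j < m" "x \<in> Zvec m"
  shows "fred c i j (fred c i j x) = x"
proof -
  have l: "length x = m" using assms by (simp add: Zvec_def)
  define y where "y = x[i := x ! j, j := x ! i]"
  have "y[i := y ! j, j := y ! i] = x"
    using assms l unfolding y_def by (intro nth_equalityI) (auto simp: nth_list_update)
  then show ?thesis using assms l unfolding fred_def y_def by (auto simp: nth_list_update)
qed

lemma edge_conj_flip:
  assumes "c \<in> Zvec m" "y \<in> Zvec m"
  shows "flip k (edge c l (flip k y)) = edge (flip k c) l y"
proof -
  have inv: "\<And>x. x \<in> Zvec m \<Longrightarrow> flip k x \<in> Zvec m \<and> flip k (flip k x) = x" by simp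
  show ?thesis unfolding edge_def using conj_transpose[OF inv] assms by (simp add: flip_comm)
qed

lemma ones_Zvec: "replicate m True \<in> Zvec m"
  by (simp add: Zvec_def)

lemma pair_rel:
  assumes "a \<in> Zvec m" "i \<noteq> j" "i < m" "j < m"
  shows "rel m (edge a j) (edge (flip i a) j)"
proof -
  have Q: "\<forall>i j. i \<noteq> j \<longrightarrow> i < m \<longrightarrow> j < m \<longrightarrow> rel m (edge a j) (edge (flip i a) j)"
  proof (rule reach[where b = "replicate m True" and m = m])
    show "\<forall>i j. i \<noteq> j \<longrightarrow> i < m \<longrightarrow> j < m \<longrightarrow>
      rel m (edge (replicate m True) j) (edge (flip i (replicate m True)) j)"
    proof (intro allI impI)
      fix i j assume ij: "i \<noteq> j" "i < m" "j < m"
      have "realz m (apply_gate ({..<m} - {i,j}, j))"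
        by (rule mcnot[where b = i]) (use ij in auto)
      then show "rel m (edge (replicate m True) j) (edge (flip i (replicate m True)) j)"
        unfolding rel_def by (rule realz_cong) (simp add: pair_ones[OF ij])
    qed
  next
    fix a k assume a: "a \<in> Zvec m" "k < m"
      and Q: "\<forall>i j. i \<noteq> j \<longrightarrow> i < m \<longrightarrow> j < m \<longrightarrow> rel m (edge a j) (edge (flip i a) j)"
    show "\<forall>i j. i \<noteq> j \<longrightarrow> i < m \<longrightarrow> j < m \<longrightarrow> rel m (edge (flip k a) j) (edge (flip i (flip k a)) j)"
    proof (intro allI impI)
      fix i j assume ij: "i \<noteq> j" "i < m" "j < m"
      have "rel m (edge a j) (edge (flip i a) j)" using Q ij by blast
      from rel_conj_flip[OF this a(1) _ a(2)] a show "rel m (edge (flip k a) j) (edge (flip i (flip k a)) j)"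
        by (simp add: flip_comm)
    qed
  qed (use assms ones_Zvec in auto)
  then show ?thesis using assms by blast
qed

lemma same_dir:
  assumes "a \<in> Zvec m" "b \<in> Zvec m" "j < m"
  shows "rel m (edge a j) (edge b j)"
proof (rule reach[where Q = "\<lambda>a. rel m (edge a j) (edge b j)" and b = b, OF rel_refl _ assms(1,2)])
  fix a k assume a: "a \<in> Zvec m" "k < m" and Q: "rel m (edge a j) (edge b j)"
  show "rel m (edge (flip k a) j) (edge b j)"
  proof (cases "k = j")
    case True
    then show ?thesis using Q by (simp add: edge_flip_same)
  next
    case False
    have "rel m (edge (flip k a) j) (edge a j)"
      using rel_sym[OF pair_rel[OF a(1) False a(2) assms(3)]] a by simp
    then show ?thesis using rel_trans Q by blast
  qed
qed

lemma cross:
  assumes "c \<noteq> i" "c \<noteq> j" "i \<noteq> j" "c < m" "i < m" "j < m"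
  defines "a0 \<equiv> (replicate m False)[c := True]"
  shows "rel m (edge a0 j) (edge (flip c a0) i)"
proof -
  let ?F = "fred c i j"
  have a0: "a0 \<in> Zvec m" by (simp add: a0_def Zvec_def)
  have b0: "flip c a0 \<in> Zvec m" using a0 by simp
  have P: "realz m (edge a0 i \<circ> edge (flip c a0) i)"
    using pair_rel[OF a0 assms(1) assms(4) assms(5)] by (simp add: rel_def)
  have "realz m (?F \<circ> (edge a0 i \<circ> edge (flip c a0) i) \<circ> ?F)"
    using realz_comp[OF realz_fred[OF assms(1-6)] realz_comp[OF P realz_fred[OF assms(1-6)]]]
    by (simp add: comp_assoc)
  then show ?thesis unfolding rel_def
  proof (rule realz_cong)
    fix x assume x: "x \<in> Zvec m"
    have inv: "\<And>x. x \<in> Zvec m \<Longrightarrow> ?F x \<in> Zvec m \<and> ?F (?F x) = x"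
      using fred_Zvec fred_invol[OF assms(1-6)] by blast
    have l: "length a0 = m" using a0 by (simp add: Zvec_def)
    have n0: "a0 ! k = (k = c)" if "k < m" for k using that assms by (simp add: a0_def nth_list_update)
    have F1: "?F a0 = a0" using assms l n0 unfolding fred_def
      by (intro nth_equalityI) (auto simp: nth_list_update)
    have F2: "?F (flip i a0) = flip j a0" using assms l n0 unfolding fred_def
      by (intro nth_equalityI) (auto simp: nth_list_update nth_flip)
    have F3: "?F (flip c a0) = flip c a0" using assms l n0 unfolding fred_def
      by (auto simp: nth_flip)
    have F4: "?F (flip i (flip c a0)) = flip i (flip c a0)" using assms l n0 unfolding fred_def
      by (auto simp: nth_flip)
    have c1: "?F (edge a0 i (?F y)) = edge a0 j y" if "y \<in> Zvec m" for y
      using conj_transpose[OF inv a0 _ that, of "flip i a0"] a0 F1 F2 by (simp add: edge_def)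
    have c2: "?F (edge (flip c a0) i (?F y)) = edge (flip c a0) i y" if "y \<in> Zvec m" for y
      using conj_transpose[OF inv b0 _ that, of "flip i (flip c a0)"] b0 F3 F4 by (simp add: edge_def)
    have yz: "?F (edge (flip c a0) i (?F x)) \<in> Zvec m" using x inv b0 edge_Zvec by blast
    have "?F (edge a0 i (edge (flip c a0) i (?F x))) = ?F (edge a0 i (?F (?F (edge (flip c a0) i (?F x)))))"
      using inv edge_Zvec x b0 by metis
    also have "\<dots> = edge a0 j (?F (edge (flip c a0) i (?F x)))"
      using c1[OF yz] .
    also have "\<dots> = edge a0 j (edge (flip c a0) i x)"
      using c2[OF x] by simp
    finally show "(?F \<circ> (edge a0 i \<circ> edge (flip c a0) i) \<circ> ?F) x = (edge a0 j \<circ> edge (flip c a0) i) x"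
      by simp
  qed
qed

lemma Zvec_eq: "Zvec m = {xs. set xs \<subseteq> UNIV \<and> length xs = m}"
  by (simp add: Zvec_def)

lemma finite_Zvec: "finite (Zvec m)"
  unfolding Zvec_eq by (rule finite_lists_length_eq) simp

lemma card_Zvec: "card (Zvec m) = 2 ^ m"
proof -
  have "card {xs::bool list. set xs \<subseteq> UNIV \<and> length xs = m} = card (UNIV::bool set) ^ m"
    by (rule card_lists_length_eq) simp
  then show ?thesis unfolding Zvec_eq by simp
qed

lemma edges_all:
  assumes "m \<ge> 2" "a \<in> Zvec m" "b \<in> Zvec m" "i < m" "j < m"
  shows "rel m (edge a i) (edge b j)"
proof (cases "m \<ge> 3")
  case False
  have E: "realz m (edge a j)" if "a \<in> Zvec m" "j < m" for a j
  proof (rule reach[where Q = "\<lambda>a. realz m (edge a j)" and b = "replicate m True", OF _ _ that(1) ones_Zvec])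
    have "realz m (apply_gate ({..<m} - {j}, j))"
      using False that by (intro realz_gate) (auto simp: gate_ok_012_def gate_ok_def)
    then show "realz m (edge (replicate m True) j)"
      by (rule realz_cong) (simp add: edge_ones[OF that(2)])
  next
    fix a k assume a: "a \<in> Zvec m" "k < m" and Q: "realz m (edge a j)"
    have "realz m (flip k \<circ> edge a j \<circ> flip k)"
      using realz_comp[OF realz_flip[OF a(2)] realz_comp[OF Q realz_flip[OF a(2)]]]
      by (simp add: comp_assoc)
    then show "realz m (edge (flip k a) j)"
      by (rule realz_cong) (simp add: edge_conj_flip[OF a(1)])
  qed
  show ?thesis unfolding rel_def using realz_comp[OF E E] assms by simp
next
  case True
  show ?thesis
  proof (cases "i = j")
    case True
    then show ?thesis using same_dir assms by simp
  next
    case ij: False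
    have "{..<m} - {i,j} \<noteq> {}"
    proof
      assume "{..<m} - {i,j} = {}"
      then have "{..<m} \<subseteq> {i,j}" by blast
      then have "card {..<m} \<le> card {i,j}" by (rule card_mono[rotated]) simp
      then show False using True by (simp add: card_insert_if split: if_splits)
    qed
    then obtain c where c: "c < m" "c \<noteq> i" "c \<noteq> j" by blast
    define a0 where "a0 = (replicate m False)[c := True]"
    have a0: "a0 \<in> Zvec m" by (simp add: a0_def Zvec_def)
    have cr: "rel m (edge a0 j) (edge (flip c a0) i)"
      unfolding a0_def by (rule cross) (use c ij assms in auto)
    have "rel m (edge a i) (edge (flip c a0) i)" using same_dir assms a0 by simp
    moreover have "rel m (edge (flip c a0) i) (edge a0 j)" using rel_sym[OF cr] a0 by simp
    moreover have "rel m (edge a0 j) (edge b j)" using same_dir assms a0 by simp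
    ultimately show ?thesis using rel_trans by blast
  qed
qed

lemma K:
  assumes "m \<ge> 2" "c \<in> Zvec m" "k < m" "a \<in> Zvec m" "b \<in> Zvec m" "a \<noteq> b"
  shows "realz m (edge c k \<circ> transpose a b)"
proof -
  have "\<And>a c k. card {l. l < m \<and> a ! l \<noteq> b ! l} = d \<Longrightarrow> a \<in> Zvec m \<Longrightarrow> a \<noteq> b \<Longrightarrow> c \<in> Zvec m \<Longrightarrow> k < m
     \<Longrightarrow> realz m (edge c k \<circ> transpose a b)" for d
  proof (induction d)
    case 0
    then have "a = b" using assms(5)
      by (intro nth_equalityI) (auto simp: Zvec_def)
    then show ?case using 0 by simp
  next
    case (Suc d)
    then obtain l where l: "l < m" "a ! l \<noteq> b ! l"
      by (metis (mono_tags, lifting) card.empty empty_Collect_eq nat.simps(3))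
    have la: "length a = m" using Suc.prems by (simp add: Zvec_def)
    show ?case
    proof (cases "flip l a = b")
      case True
      then have "edge c k \<circ> transpose a b = edge c k \<circ> edge a l" by (simp add: edge_def)
      then show ?thesis using edges_all[OF assms(1) Suc.prems(4) Suc.prems(2) Suc.prems(5) l(1)]
        by (metis rel_def)
    next
      case False
      have "{i. i < m \<and> flip l a ! i \<noteq> b ! i} = {i. i < m \<and> a ! i \<noteq> b ! i} - {l}"
        using l la by (auto simp: nth_flip)
      then have cd: "card {i. i < m \<and> flip l a ! i \<noteq> b ! i} = d"
        using Suc.prems l by (simp add: card_Diff_singleton)
      have IH: "realz m (edge a l \<circ> transpose (flip l a) b)"
        by (rule Suc.IH[OF cd]) (use Suc.prems False l in auto)
      have inv: "realz m (transpose (flip l a) b \<circ> edge a l)"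
      proof (rule realz_inv[OF IH])
        fix x assume x: "x \<in> Zvec m"
        show "(transpose (flip l a) b \<circ> edge a l) x \<in> Zvec m \<and>
          (edge a l \<circ> transpose (flip l a) b) ((transpose (flip l a) b \<circ> edge a l) x) = x"
        proof
          have ez: "edge a l x \<in> Zvec m" using x Suc.prems edge_Zvec by blast
          then show "(transpose (flip l a) b \<circ> edge a l) x \<in> Zvec m"
            using assms(5) Suc.prems by (auto simp: transpose_def)
        qed simp
      qed
      have "realz m ((edge c k \<circ> edge a l) \<circ> (transpose (flip l a) b \<circ> edge a l))"
        using realz_comp[OF inv edges_all[OF assms(1) Suc.prems(4) Suc.prems(2) Suc.prems(5) l(1), unfolded rel_def]] .
      moreover have Tr: "edge a l \<circ> transpose (flip l a) b \<circ> edge a l = transpose a b"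
        unfolding edge_def by (rule transpose_comp_triple) (use Suc.prems False in auto)
      have "(edge c k \<circ> edge a l) \<circ> (transpose (flip l a) b \<circ> edge a l) = edge c k \<circ> transpose a b"
        by (metis comp_assoc Tr)
      ultimately show ?thesis by (simp add: comp_def)
    qed
  qed
  then show ?thesis using assms by blast
qed

lemma even_realz:
  assumes "m \<ge> 2" "p permutes Zvec m" "evenperm p"
  shows "realz m p"
proof -
  define e0 where "e0 = edge (replicate m True) 0"
  have e0K: "realz m (e0 \<circ> transpose a b)" if "a \<in> Zvec m" "b \<in> Zvec m" "a \<noteq> b" for a b
    unfolding e0_def using K[OF assms(1) ones_Zvec _ that] assms(1) by simp
  have "(evenperm p \<longrightarrow> realz m p) \<and> (\<not> evenperm p \<longrightarrow> realz m (e0 \<circ> p))"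
    using assms(2) finite_Zvec
  proof (induction rule: permutes_induct)
    case id
    then show ?case using realz_id by (simp add: id_def)
  next
    case (swap a b p)
    have pp: "permutation p" using swap.hyps permutes_imp_permutation finite_Zvec by blast
    have ev: "evenperm (transpose a b \<circ> p) = (\<not> evenperm p)"
    proof -
      have "\<not> evenperm (transpose a b)" using evenperm_swap[of a b] swap.hyps(3) by simp
      then show ?thesis using evenperm_comp[OF permutation_swap_id pp] by blast
    qed
    show ?case
    proof (intro conjI impI)
      assume "\<not> evenperm (transpose a b \<circ> p)"
      then have rp: "realz m p" using ev swap.IH by simp
      show "realz m (e0 \<circ> (transpose a b \<circ> p))"
        using realz_comp[OF rp e0K[OF swap.hyps(1-3)]] by (metis comp_assoc)
    next
      assume "evenperm (transpose a b \<circ> p)"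
      then have rp: "realz m (e0 \<circ> p)" using ev swap.IH by (simp add: comp_def)
      have i: "realz m (transpose a b \<circ> e0)"
      proof (rule realz_inv[OF e0K[OF swap.hyps(1-3)]])
        fix x assume x: "x \<in> Zvec m"
        show "(transpose a b \<circ> e0) x \<in> Zvec m \<and> (e0 \<circ> transpose a b) ((transpose a b \<circ> e0) x) = x"
          using x swap.hyps edge_Zvec[OF ones_Zvec x] by (auto simp: e0_def transpose_def)
      qed
      have "realz m ((transpose a b \<circ> e0) \<circ> (e0 \<circ> p))"
        using realz_comp[OF rp i] .
      moreover have "(transpose a b \<circ> e0) \<circ> (e0 \<circ> p) = transpose a b \<circ> p"
        by (auto simp: e0_def)
      ultimately show "realz m (transpose a b \<circ> p)" by simp
    qed
  qed
  then show ?thesis using assms by blast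
qed

lemma extend_perm:
  assumes "finite A" "finite B" "bij_betw \<sigma> A B"
  shows "\<exists>h. h permutes (A \<union> B) \<and> (\<forall>a\<in>A. h a = \<sigma> a)"
proof -
  have cAB: "card A = card B" using assms(3) bij_betw_same_card by blast
  have "card (B - A) = card (A - B)"
    using assms cAB by (simp add: card_Diff_subset_Int Int_commute)
  then obtain \<rho> where r: "bij_betw \<rho> (B - A) (A - B)"
    using finite_same_card_bij assms by blast
  define h where "h x = (if x \<in> A then \<sigma> x else if x \<in> B then \<rho> x else x)" for x
  have hA: "h ` A = B" using assms(3) by (auto simp: h_def bij_betw_def image_def)
  have hB: "h ` (B - A) = A - B" using r by (auto simp: h_def bij_betw_def image_def)
  have U: "A \<union> B = A \<union> (B - A)" by blast
  have im: "h ` (A \<union> B) = A \<union> B"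
  proof -
    have "h ` (A \<union> B) = h ` A \<union> h ` (B - A)" by (metis U image_Un)
    then show ?thesis unfolding hA hB by blast
  qed
  have inj: "inj_on h (A \<union> B)"
    by (rule eq_card_imp_inj_on) (use assms im in auto)
  have "h permutes (A \<union> B)"
  proof (rule bij_imp_permutes)
    show "bij_betw h (A \<union> B) (A \<union> B)" unfolding bij_betw_def using inj im by blast
  qed (simp add: h_def)
  then show ?thesis by (auto simp: h_def)
qed

lemma phi_eq: "phi n (n + q) x = x @ replicate q False"
  by (simp add: phi_def)

lemma psi_eq: "psi (n + q) n x = take n x"
  by (simp add: psi_def)

lemma part1:
  fixes n q :: nat and f :: "bool list \<Rightarrow> bool list"
  assumes "0 < q"
    and fZ: "\<forall>x\<in>Zvec n. f x \<in> Zvec n"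
    and fib: "\<forall>y\<in>Zvec n. card {x\<in>Zvec n. f x = y} \<le> 2 ^ q"
  shows "\<exists>h. h permutes Zvec (n + q) \<and> evenperm h \<and>
            card {x\<in>Zvec (n + q). h x \<noteq> x} \<le> 2 ^ (n + 1) \<and>
            (\<forall>x\<in>Zvec n. psi (n + q) n (h (phi n (n + q) x)) = f x)"
proof -
  define Fy where "Fy y = {x\<in>Zvec n. f x = y}" for y
  have finF: "finite (Fy y)" for y using finite_Zvec by (simp add: Fy_def)
  have "\<forall>y\<in>Zvec n. \<exists>\<iota>. \<iota> ` Fy y \<subseteq> Zvec q \<and> inj_on \<iota> (Fy y)"
  proof
    fix y assume y: "y \<in> Zvec n"
    have "card (Fy y) \<le> card (Zvec q)" using fib y by (simp add: card_Zvec Fy_def)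
    then show "\<exists>\<iota>. \<iota> ` Fy y \<subseteq> Zvec q \<and> inj_on \<iota> (Fy y)"
      by (rule card_le_inj[OF finF finite_Zvec])
  qed
  from bchoice[OF this] obtain \<iota> where io': "\<forall>y\<in>Zvec n. \<iota> y ` Fy y \<subseteq> Zvec q \<and> inj_on (\<iota> y) (Fy y)"
    by blast
  then have io: "\<And>y. y \<in> Zvec n \<Longrightarrow> \<iota> y ` Fy y \<subseteq> Zvec q \<and> inj_on (\<iota> y) (Fy y)" by blast
  define x0 where "x0 = replicate n False"
  define z where "z = replicate q False"
  define y0 where "y0 = f x0"
  have x0: "x0 \<in> Zvec n" by (simp add: x0_def Zvec_def)
  have y0: "y0 \<in> Zvec n" using fZ x0 y0_def by blast
  have z: "z \<in> Zvec q" by (simp add: z_def Zvec_def)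
  define s where "s y = (if y = y0 then transpose (\<iota> y0 x0) z else id)" for y
  define t where "t x = s (f x) (\<iota> (f x) x)" for x
  have x0F: "x0 \<in> Fy y0" using x0 by (simp add: Fy_def y0_def)
  have tZ: "t x \<in> Zvec q" if "x \<in> Zvec n" for x
  proof -
    have "x \<in> Fy (f x)" using that by (simp add: Fy_def)
    then have "\<iota> (f x) x \<in> Zvec q" using io fZ that by blast
    moreover have "\<iota> y0 x0 \<in> Zvec q" using io[OF y0] x0F by blast
    ultimately show ?thesis using z by (auto simp: t_def s_def transpose_def)
  qed
  have t0: "t x0 = z" by (simp add: t_def s_def y0_def[symmetric])
  have tinj: "x = x'" if "x \<in> Zvec n" "x' \<in> Zvec n" "f x = f x'" "t x = t x'" for x x'
  proof -
    have F: "x \<in> Fy (f x)" "x' \<in> Fy (f x)" using that by (auto simp: Fy_def)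
    have "inj (s (f x))" by (simp add: s_def inj_transpose)
    then have "\<iota> (f x) x = \<iota> (f x) x'" using that(3,4) by (simp add: t_def inj_eq)
    then show ?thesis using io[of "f x"] fZ that(1) F by (meson inj_onD)
  qed
  define g where "g x = f x @ t x" for x
  define m where "m = n + q"
  have gZ: "g x \<in> Zvec m" if "x \<in> Zvec n" for x
    using tZ[OF that] fZ that by (simp add: g_def m_def Zvec_def)
  have tg: "take n (g x) = f x" if "x \<in> Zvec n" for x
    using fZ that by (simp add: g_def Zvec_def)
  have ginj: "inj_on g (Zvec n)"
  proof (rule inj_onI)
    fix x x' assume a: "x \<in> Zvec n" "x' \<in> Zvec n" "g x = g x'"
    have "f x = f x'" using tg a by metis
    moreover have "t x = t x'" using a fZ by (simp add: g_def Zvec_def)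
    ultimately show "x = x'" using tinj a by blast
  qed
  define ph where "ph x = x @ z" for x
  have phinj: "inj_on ph (Zvec n)" by (rule inj_onI) (simp add: ph_def)
  define A where "A = ph ` Zvec n"
  define B where "B = g ` Zvec n"
  have finA: "finite A" "finite B" using finite_Zvec by (simp_all add: A_def B_def)
  have cA: "card A = 2 ^ n" using phinj card_Zvec by (simp add: A_def card_image)
  have cB: "card B = 2 ^ n" using ginj card_Zvec by (simp add: B_def card_image)
  have AZ: "A \<subseteq> Zvec m" using z by (auto simp: A_def ph_def Zvec_def m_def)
  have BZ: "B \<subseteq> Zvec m" using gZ by (auto simp: B_def)
  define \<sigma> where "\<sigma> = g \<circ> take n"
  have bij: "bij_betw \<sigma> A B"
  proof -
    have "bij_betw (g \<circ> take n) A B"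
    proof (rule bij_betw_trans)
      have tph: "take n (ph x) = x" if "x \<in> Zvec n" for x using that by (simp add: ph_def Zvec_def)
      have i1: "inj_on (take n) A"
      proof (rule inj_onI)
        fix a a' assume "a \<in> A" "a' \<in> A" "take n a = take n a'"
        then obtain x x' where "x \<in> Zvec n" "x' \<in> Zvec n" "a = ph x" "a' = ph x'" "take n a = take n a'"
          unfolding A_def by blast
        then show "a = a'" using tph by metis
      qed
      have i2: "take n ` A = Zvec n"
      proof -
        have "take n ` A = (\<lambda>x. take n (ph x)) ` Zvec n" unfolding A_def by (rule image_image)
        also have "\<dots> = Zvec n" using tph by simp
        finally show ?thesis .
      qed
      show "bij_betw (take n) A (Zvec n)"
        using i1 i2 by (simp add: bij_betw_def)
      show "bij_betw g (Zvec n) B" using ginj by (simp add: B_def bij_betw_def)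
    qed
    then show ?thesis by (simp add: \<sigma>_def)
  qed
  obtain h where h: "h permutes (A \<union> B)" "\<forall>a\<in>A. h a = \<sigma> a"
    using extend_perm[OF finA bij] by blast
  have hZ: "h permutes Zvec m" using h(1) AZ BZ permutes_subset by blast
  have hph: "h (ph x) = g x" if "x \<in> Zvec n" for x
    using h(2) that by (auto simp: A_def \<sigma>_def ph_def Zvec_def)
  have phi_ph: "phi n (n + q) x = ph x" for x by (simp add: phi_eq ph_def z_def)
  have inter: "ph y0 \<in> A \<inter> B"
  proof -
    have "g x0 = ph y0" by (simp add: g_def ph_def t0 y0_def)
    then show ?thesis using x0 y0 unfolding A_def B_def by (metis IntI image_eqI)
  qed
  have cU: "card (A \<union> B) < 2 ^ (n + 1)"
  proof -
    have "A \<inter> B \<noteq> {}" using inter by blast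
    then have "card (A \<inter> B) > 0" using finA by (simp add: card_gt_0_iff)
    moreover have "card A + card B = card (A \<union> B) + card (A \<inter> B)" by (rule card_Un_Int[OF finA])
    ultimately show ?thesis using cA cB by simp
  qed
  have supp: "{x\<in>Zvec m. h x \<noteq> x} \<subseteq> A \<union> B" using permutes_not_in[OF h(1)] by blast
  have fin_m: "finite (Zvec m)" by (rule finite_Zvec)
  show ?thesis
  proof (cases "evenperm h")
    case True
    have "card {x\<in>Zvec m. h x \<noteq> x} \<le> card (A \<union> B)"
      by (rule card_mono) (use finA supp in auto)
    then have c: "card {x\<in>Zvec m. h x \<noteq> x} \<le> 2 ^ (n + 1)" using cU by linarith
    show ?thesis
    proof (intro exI[of _ h] conjI ballI)
      show "h permutes Zvec (n + q)" using hZ by (simp add: m_def)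
      show "evenperm h" by fact
      show "card {x\<in>Zvec (n + q). h x \<noteq> x} \<le> 2 ^ (n + 1)" using c by (simp add: m_def)
      fix x assume x: "x \<in> Zvec n"
      show "psi (n + q) n (h (phi n (n + q) x)) = f x"
        unfolding psi_eq phi_ph hph[OF x] tg[OF x] ..
    qed
  next
    case False
    define w where "w = True # replicate (q - 1) False"
    define u v where "u = y0 @ z" and "v = y0 @ w"
    have zw: "z \<noteq> w" using assms(1) by (cases q) (simp_all add: z_def w_def)
    have uv: "u \<noteq> v" using zw by (simp add: u_def v_def)
    have uZ: "u \<in> Zvec m" "v \<in> Zvec m" using y0 assms(1)
      by (simp_all add: u_def v_def z_def w_def Zvec_def m_def)
    have uB: "u \<in> B" using inter by (simp add: u_def ph_def)
    define h' where "h' = transpose u v \<circ> h"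
    have h'Z: "h' permutes Zvec m" unfolding h'_def
      by (rule permutes_compose[OF hZ permutes_swap_id[OF uZ]])
    have ev: "evenperm h'"
    proof -
      have ph: "permutation h" using hZ fin_m by (rule permutes_imp_permutation[rotated])
      have ne: "\<not> evenperm (transpose u v)" using evenperm_swap[of u v] uv by simp
      have "evenperm (transpose u v \<circ> h) = (evenperm (transpose u v) = evenperm h)"
        by (rule evenperm_comp[OF permutation_swap_id ph])
      then show ?thesis using ne False unfolding h'_def by simp
    qed
    have supp': "{x\<in>Zvec m. h' x \<noteq> x} \<subseteq> insert v (A \<union> B)"
    proof
      fix x assume x: "x \<in> {x\<in>Zvec m. h' x \<noteq> x}"
      show "x \<in> insert v (A \<union> B)"
      proof (cases "h x = x")
        case True
        then have "transpose u v x \<noteq> x" using x by (simp add: h'_def)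
        then have "x = u \<or> x = v" by (auto simp: transpose_def split: if_splits)
        then show ?thesis using uB by blast
      next
        case False
        then show ?thesis using supp x by blast
      qed
    qed
    have "card {x\<in>Zvec m. h' x \<noteq> x} \<le> card (insert v (A \<union> B))"
      by (rule card_mono) (use finA supp' in auto)
    also have "\<dots> \<le> card (A \<union> B) + 1" using finA by (simp add: card_insert_if)
    finally have c': "card {x\<in>Zvec m. h' x \<noteq> x} \<le> 2 ^ (n + 1)" using cU by linarith
    have tu: "take n u = y0" "take n v = y0" using y0 by (simp_all add: u_def v_def Zvec_def)
    have ps: "take n (h' (ph x)) = f x" if "x \<in> Zvec n" for x
    proof -
      have "take n (transpose u v (g x)) = take n (g x)"
        using tu by (cases "g x = u"; cases "g x = v") (simp_all add: transpose_def)
      then show ?thesis using hph[OF that] tg[OF that] by (simp add: h'_def)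
    qed
    show ?thesis
    proof (intro exI[of _ h'] conjI ballI)
      show "h' permutes Zvec (n + q)" using h'Z by (simp add: m_def)
      show "evenperm h'" by fact
      show "card {x\<in>Zvec (n + q). h' x \<noteq> x} \<le> 2 ^ (n + 1)" using c' by (simp add: m_def)
      fix x assume x: "x \<in> Zvec n"
      show "psi (n + q) n (h' (phi n (n + q) x)) = f x"
        unfolding psi_eq phi_ph using ps[OF x] .
    qed
  qed
qed

theorem mainTheorem2:
  fixes n q :: nat and f :: "bool list \<Rightarrow> bool list"
  assumes "n \<ge> 1" and "0 < q" and "q \<le> n"
    and "\<forall>x\<in>Zvec n. f x \<in> Zvec n"
    and "\<forall>y\<in>Zvec n. card {x\<in>Zvec n. f x = y} \<le> 2 ^ q"
  shows "(\<exists>h. h permutes Zvec (n + q) \<and> evenperm h \<and>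
            card {x\<in>Zvec (n + q). h x \<noteq> x} \<le> 2 ^ (n + 1) \<and>
            (\<forall>x\<in>Zvec n. psi (n + q) n (h (phi n (n + q) x)) = f x))
         \<and> f \<in> Fset n q"
proof -
  obtain h where h: "h permutes Zvec (n + q)" "evenperm h"
      "card {x\<in>Zvec (n + q). h x \<noteq> x} \<le> 2 ^ (n + 1)"
      "\<forall>x\<in>Zvec n. psi (n + q) n (h (phi n (n + q) x)) = f x"
    using part1[OF assms(2,4,5)] by blast
  have "realz (n + q) h"
    by (rule even_realz) (use assms h in auto)
  then obtain c where c: "\<forall>g\<in>set c. gate_ok_012 (n + q) g"
      "\<forall>x\<in>Zvec (n + q). run_circuit c x = h x"
    unfolding realz_def by blast
  have "f \<in> Fset n q"
    unfolding Fset_def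
  proof (intro CollectI exI[of _ c] conjI ballI)
    fix x assume x: "x \<in> Zvec n"
    have "phi n (n + q) x \<in> Zvec (n + q)" using x by (simp add: phi_def Zvec_def)
    then show "psi (n + q) n (run_circuit c (phi n (n + q) x)) = f x"
      using c(2) h(4) x by simp
  qed (use c in auto)
  then show ?thesis using h by blast
qed

end
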